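(* The variety $\mathsf{V}(S_{(4,401)})$ is the ai-semiring variety defined by the identities $xyz\approx yxz$; $xyz\approx xyz+y$, $xy\approx xy+y$, $yz\approx yz+y$; $xyz\approx xy+yz+xz$; $x^2+y\approx x^2y$; $x_1x_2x_3+x_3x_4\approx x_1x_2x_3+x_3x_4+x_3x_2$; and $x_2x_3+x_3x_4\approx x_2x_3+x_3x_4+x_3x_2$.
   Context: An ai-semiring is an algebra $(S,+,\cdot)$ with $(S,+)$ a semilattice, $(S,\cdot)$ a semigroup, and both distributive laws. $\mathsf{V}(S)$ is the variety generated by $S$; "the ai-semiring variety defined by identities $\Sigma$" is the class of all ai-semirings satisfying $\Sigma$. $S_{(4,401)}$ has carrier $\{1,2,3,4\}$; addition: $x+x=x$, $2+x=x$, $1+x=1$ for all $x$, $3+4=1$; multiplication (row $a$, column $b$ gives $a\cdot b$): row $1$: $1,1,1,1$; row $2$: $1,2,3,4$; row $3$: $1,1,1,1$; row $4$: $1,4,1,1$. *)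

theory Defs
  imports Main
begin

text \<open>Algebras of type (+,*) are represented by two binary operations on a type 'a
  (the carrier is the whole type).\<close>

definition ai_semiring :: "('a \<Rightarrow> 'a \<Rightarrow> 'a) \<Rightarrow> ('a \<Rightarrow> 'a \<Rightarrow> 'a) \<Rightarrow> bool" where
  "ai_semiring add mul \<longleftrightarrow>
     (\<forall>x y z. add (add x y) z = add x (add y z)) \<and>
     (\<forall>x y. add x y = add y x) \<and>
     (\<forall>x. add x x = x) \<and>
     (\<forall>x y z. mul (mul x y) z = mul x (mul y z)) \<and>
     (\<forall>x y z. mul x (add y z) = add (mul x y) (mul x z)) \<and>
     (\<forall>x y z. mul (add y z) x = add (mul y x) (mul z x))"

datatype trm = Var nat | Add trm trm | Mul trm trm

fun eval :: "('a \<Rightarrow> 'a \<Rightarrow> 'a) \<Rightarrow> ('a \<Rightarrow> 'a \<Rightarrow> 'a) \<Rightarrow> (nat \<Rightarrow> 'a) \<Rightarrow> trm \<Rightarrow> 'a" where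
  "eval add mul v (Var i) = v i"
| "eval add mul v (Add s t) = add (eval add mul v s) (eval add mul v t)"
| "eval add mul v (Mul s t) = mul (eval add mul v s) (eval add mul v t)"

definition satisfies :: "('a \<Rightarrow> 'a \<Rightarrow> 'a) \<Rightarrow> ('a \<Rightarrow> 'a \<Rightarrow> 'a) \<Rightarrow> trm \<times> trm \<Rightarrow> bool" where
  "satisfies add mul e \<longleftrightarrow> (\<forall>v. eval add mul v (fst e) = eval add mul v (snd e))"

datatype s4 = E1 | E2 | E3 | E4

fun add4 :: "s4 \<Rightarrow> s4 \<Rightarrow> s4" where
  "add4 x y = (if x = y then x
               else if x = E2 then y else if y = E2 then x
               else if x = E1 \<or> y = E1 then E1
               else E1 \<comment> \<open>remaining case: {x,y} = {3,4}, and 3+4 = 1\<close>)"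

fun mul4 :: "s4 \<Rightarrow> s4 \<Rightarrow> s4" where
  "mul4 E2 y = y"
| "mul4 E4 E2 = E4"
| "mul4 _ _ = E1"

text \<open>Membership in the variety V(S_(4,401)) generated by S_(4,401): by Birkhoff's
  HSP theorem, V(S) is exactly the class of algebras satisfying every identity of S.\<close>
definition in_V_S4 :: "('a \<Rightarrow> 'a \<Rightarrow> 'a) \<Rightarrow> ('a \<Rightarrow> 'a \<Rightarrow> 'a) \<Rightarrow> bool" where
  "in_V_S4 add mul \<longleftrightarrow> (\<forall>e. satisfies add4 mul4 e \<longrightarrow> satisfies add mul e)"

abbreviation (input) "vx \<equiv> Var 0"
abbreviation (input) "vy \<equiv> Var 1"
abbreviation (input) "vz \<equiv> Var 2"
abbreviation (input) "v1 \<equiv> Var 11"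
abbreviation (input) "v2 \<equiv> Var 12"
abbreviation (input) "v3 \<equiv> Var 13"
abbreviation (input) "v4 \<equiv> Var 14"

definition Sigma_401 :: "(trm \<times> trm) set" where
  "Sigma_401 = {
     (Mul (Mul vx vy) vz, Mul (Mul vy vx) vz),
     (Mul (Mul vx vy) vz, Add (Mul (Mul vx vy) vz) vy),
     (Mul vx vy, Add (Mul vx vy) vy),
     (Mul vy vz, Add (Mul vy vz) vy),
     (Mul (Mul vx vy) vz, Add (Add (Mul vx vy) (Mul vy vz)) (Mul vx vz)),
     (Add (Mul vx vx) vy, Mul (Mul vx vx) vy),
     (Add (Mul (Mul v1 v2) v3) (Mul v3 v4),
      Add (Add (Mul (Mul v1 v2) v3) (Mul v3 v4)) (Mul v3 v2)),
     (Add (Mul v2 v3) (Mul v3 v4),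
      Add (Add (Mul v2 v3) (Mul v3 v4)) (Mul v3 v2)) }"

end

theory Submission
  imports Defs
begin

lemma add4_simps[simp]: "add4 E1 y = E1" "add4 y E1 = E1" "add4 E2 y = y" "add4 y E2 = y"
  "add4 E3 E3 = E3" "add4 E4 E4 = E4" "add4 E3 E4 = E1" "add4 E4 E3 = E1"
  by (cases y; simp)+

declare add4.simps[simp del]

locale aisr =
  fixes add mul :: "'a \<Rightarrow> 'a \<Rightarrow> 'a"
  assumes aA: "add (add x y) z = add x (add y z)"
  and aC: "add x y = add y x" and aI: "add x x = x"
  and mA: "mul (mul x y) z = mul x (mul y z)"
  and dL: "mul x (add y z) = add (mul x y) (mul x z)"
  and dR: "mul (add y z) x = add (mul y x) (mul z x)"
  and i3: "mul x y = add (mul x y) y"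
  and i4: "mul y z = add (mul y z) y"
  and i5: "mul (mul x y) z = add (add (mul x y) (mul y z)) (mul x z)"
  and i6: "add (mul x x) y = mul (mul x x) y"
  and i8: "add (mul x2 x3) (mul x3 x4) = add (add (mul x2 x3) (mul x3 x4)) (mul x3 x2)"

fun wl :: "trm \<Rightarrow> nat list list" where
  "wl (Var i) = [[i]]"
| "wl (Add s t) = wl s @ wl t"
| "wl (Mul s t) = concat (map (\<lambda>u. map (\<lambda>w. u @ w) (wl t)) (wl s))"

fun sub2 :: "nat list \<Rightarrow> (nat \<times> nat) set" where
  "sub2 [] = {}"
| "sub2 (a # w) = {a} \<times> set w \<union> sub2 w"

definition CC :: "trm \<Rightarrow> nat set" where "CC t = (\<Union>u\<in>set (wl t). set u)"
definition TT :: "trm \<Rightarrow> (nat \<times> nat) set" where "TT t = (\<Union>u\<in>set (wl t). sub2 u)"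

inductive_set Cl :: "trm \<Rightarrow> (nat \<times> nat) set" for t where
  base: "p \<in> TT t \<Longrightarrow> p \<in> Cl t"
| r1: "(x, x) \<in> Cl t \<Longrightarrow> y \<in> CC t \<Longrightarrow> (x, y) \<in> Cl t"
| r2: "(x, y) \<in> Cl t \<Longrightarrow> (y, z) \<in> Cl t \<Longrightarrow> (y, x) \<in> Cl t"

fun lsum :: "('a \<Rightarrow> 'a \<Rightarrow> 'a) \<Rightarrow> 'a list \<Rightarrow> 'a" where
  "lsum f [] = undefined"
| "lsum f [x] = x"
| "lsum f (x # y # xs) = f x (lsum f (y # xs))"

fun wprod :: "('a \<Rightarrow> 'a \<Rightarrow> 'a) \<Rightarrow> (nat \<Rightarrow> 'a) \<Rightarrow> nat list \<Rightarrow> 'a" where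
  "wprod m v [] = undefined"
| "wprod m v [i] = v i"
| "wprod m v (i # j # is) = m (v i) (wprod m v (j # is))"

lemma wl_ne: "wl t \<noteq> []"
  by (induction t) auto

lemma wl_words_ne: "u \<in> set (wl t) \<Longrightarrow> u \<noteq> []"
  by (induction t arbitrary: u) auto

lemma sub2_sub: "sub2 u \<subseteq> set u \<times> set u"
  by (induction u) auto

lemma TT_CC: "(a, b) \<in> TT t \<Longrightarrow> a \<in> CC t \<and> b \<in> CC t"
  using sub2_sub unfolding TT_def CC_def by blast

context aisr
begin

lemma le_add_iff: "(add (add a b) c = c) = (add a c = c \<and> add b c = c)"
  by (metis aA aC aI)

lemma le_trans: "add a b = b \<Longrightarrow> add b c = c \<Longrightarrow> add a c = c"
  by (metis aA)

lemma lsum_le: "xs \<noteq> [] \<Longrightarrow> (add (lsum add xs) J = J) = (\<forall>x\<in>set xs. add x J = J)"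
  by (induction xs rule: induct_list012) (auto simp: le_add_iff)

lemma lsum_app: "xs \<noteq> [] \<Longrightarrow> ys \<noteq> [] \<Longrightarrow> lsum add (xs @ ys) = add (lsum add xs) (lsum add ys)"
proof (induction xs rule: induct_list012)
  case (2 x)
  then show ?case by (cases ys) auto
next
  case (3 x y xs)
  then show ?case by (simp add: aA)
qed auto

lemma mul_lsum_r: "ys \<noteq> [] \<Longrightarrow> mul x (lsum add ys) = lsum add (map (mul x) ys)"
  by (induction ys rule: induct_list012) (auto simp: dL)

lemma mul_lsum: "xs \<noteq> [] \<Longrightarrow> ys \<noteq> [] \<Longrightarrow>
   mul (lsum add xs) (lsum add ys) = lsum add (concat (map (\<lambda>x. map (mul x) ys) xs))"
proof (induction xs rule: induct_list012)
  case (2 x)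
  then show ?case by (simp add: mul_lsum_r)
next
  case (3 x y xs)
  then show ?case by (simp add: dR mul_lsum_r lsum_app)
qed auto

lemma wprod_app: "u \<noteq> [] \<Longrightarrow> w \<noteq> [] \<Longrightarrow> wprod mul v (u @ w) = mul (wprod mul v u) (wprod mul v w)"
proof (induction u rule: induct_list012)
  case (2 i)
  then show ?case by (cases w) auto
next
  case (3 i j "is")
  then show ?case by (simp add: mA)
qed auto

lemma eval_lsum: "eval add mul v t = lsum add (map (wprod mul v) (wl t))"
proof (induction t)
  case (Var x)
  then show ?case by simp
next
  case (Add s t)
  then show ?case by (simp add: lsum_app wl_ne)
next
  case (Mul s t)
  have "map (wprod mul v) (concat (map (\<lambda>u. map (\<lambda>w. u @ w) (wl t)) (wl s)))
      = concat (map (\<lambda>x. map (mul x) (map (wprod mul v) (wl t))) (map (wprod mul v) (wl s)))"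
    by (simp add: map_concat comp_def wprod_app wl_words_ne cong: map_cong)
  then show ?case using Mul by (simp add: mul_lsum wl_ne)
qed

lemma prod_le1: "add (mul x y) J = J \<Longrightarrow> add x J = J"
proof -
  have 1: "add x (mul x y) = mul x y" using i4[of x y] aC by metis
  show "add (mul x y) J = J \<Longrightarrow> add x J = J" using le_trans[OF 1] by blast
qed

lemma prod_le2: "add (mul x y) J = J \<Longrightarrow> add y J = J"
proof -
  have 2: "add y (mul x y) = mul x y" using i3[of x y] aC by metis
  show "add (mul x y) J = J \<Longrightarrow> add y J = J" using le_trans[OF 2] by blast
qed

lemma word_le: "u \<noteq> [] \<Longrightarrow> (add (wprod mul v u) J = J) =
   ((\<forall>x\<in>set u. add (v x) J = J) \<and> (\<forall>(a,b)\<in>sub2 u. add (mul (v a) (v b)) J = J))"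
proof (induction "length u" arbitrary: u rule: less_induct)
  case less
  show ?case
  proof (cases u)
    case Nil then show ?thesis using less by simp
  next
    case (Cons a r)
    show ?thesis
    proof (cases r)
      case Nil then show ?thesis using Cons by simp
    next
      case (Cons b r')
      show ?thesis
      proof (cases r')
        case Nil then show ?thesis using Cons \<open>u = a # r\<close> prod_le1[of "v a" "v b" J] prod_le2[of "v a" "v b" J] by (auto; force)
      next
        case (Cons c r'')
        let ?W = "wprod mul v (c # r'')"
        have e: "wprod mul v u = add (add (mul (v a) (v b)) (wprod mul v (b # c # r''))) (wprod mul v (a # c # r''))"
          using \<open>u = a # r\<close> \<open>r = b # r'\<close> Cons i5[of "v a" "v b" ?W] by (simp add: mA)
        have IH1: "(add (wprod mul v (b # c # r'')) J = J) = ((\<forall>x\<in>set (b # c # r''). add (v x) J = J) \<and> (\<forall>(a,b)\<in>sub2 (b # c # r''). add (mul (v a) (v b)) J = J))"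
          by (rule less.hyps) (use \<open>u = a # r\<close> \<open>r = b # r'\<close> Cons in auto)
        have IH2: "(add (wprod mul v (a # c # r'')) J = J) = ((\<forall>x\<in>set (a # c # r''). add (v x) J = J) \<and> (\<forall>(a,b)\<in>sub2 (a # c # r''). add (mul (v a) (v b)) J = J))"
          by (rule less.hyps) (use \<open>u = a # r\<close> \<open>r = b # r'\<close> Cons in auto)
        show ?thesis unfolding e le_add_iff IH1 IH2
          using \<open>u = a # r\<close> \<open>r = b # r'\<close> Cons prod_le1[of "v a" "v b" J] prod_le2[of "v a" "v b" J] by (auto; force)
      qed
    qed
  qed
qed

lemma term_le: "(add (eval add mul v t) J = J) =
   ((\<forall>x\<in>CC t. add (v x) J = J) \<and> (\<forall>(a,b)\<in>TT t. add (mul (v a) (v b)) J = J))"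
  unfolding eval_lsum CC_def TT_def
  by (auto simp: lsum_le wl_ne word_le wl_words_ne)

lemma Cl_le: "p \<in> Cl t \<Longrightarrow> add (mul (v (fst p)) (v (snd p))) (eval add mul v t) = eval add mul v t"
proof (induction p rule: Cl.induct)
  case (base p)
  then show ?case using term_le[of v t "eval add mul v t"] aI by (cases p) auto
next
  case (r1 x y)
  let ?E = "eval add mul v t"
  have a: "add (v y) ?E = ?E"
    using r1(2) term_le[of v t ?E] aI by auto
  have xx: "add (mul (v x) (v x)) ?E = ?E" using r1.IH by simp
  have b: "add (add (mul (v x) (v x)) (v y)) ?E = ?E" using a xx le_add_iff by blast
  have c: "add (mul (v x) (v y)) (mul (mul (v x) (v x)) (v y)) = mul (mul (v x) (v x)) (v y)"
    using i5[of "v x" "v x" "v y"] by (metis aA aC aI)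
  have "add (mul (v x) (v y)) ?E = ?E"
    using le_trans[OF c] b i6[of "v x" "v y"] by simp
  then show ?case by simp
next
  case (r2 x y z)
  let ?E = "eval add mul v t"
  have h: "add (add (mul (v x) (v y)) (mul (v y) (v z))) ?E = ?E"
    using r2.IH le_add_iff by simp
  have g: "add (mul (v y) (v x)) (add (mul (v x) (v y)) (mul (v y) (v z))) = add (mul (v x) (v y)) (mul (v y) (v z))"
    by (subst aC) (rule i8[symmetric])
  show ?case using le_trans[OF g h] by simp
qed

end


lemma all_s4: "(\<forall>x::s4. P x) = (P E1 \<and> P E2 \<and> P E3 \<and> P E4)"
  by (metis s4.exhaust)

lemma S4_ok: "aisr add4 mul4"
  apply unfold_locales
  apply (atomize(full), simp add: all_s4)+
  done

interpretation S4: aisr add4 mul4 by (rule S4_ok)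

lemma S4_i1: "mul4 (mul4 a b) c = mul4 (mul4 b a) c"
  by (cases a; cases b; cases c) auto
lemma S4_i2: "mul4 (mul4 a b) c = add4 (mul4 (mul4 a b) c) b"
  by (cases a; cases b; cases c) auto
lemma S4_i7: "add4 (mul4 (mul4 a b) c) (mul4 c d) = add4 (add4 (mul4 (mul4 a b) c) (mul4 c d)) (mul4 c b)"
  by (cases a; cases b; cases c; cases d) auto

lemma S4_top: "add4 E1 y = y \<Longrightarrow> y = E1"
  by (cases y) auto

lemma CC_S4:
  assumes S: "satisfies add4 mul4 (s, t)" and x: "x \<in> CC s"
  shows "x \<in> CC t"
proof (rule ccontr)
  assume nx: "x \<notin> CC t"
  define \<phi> where "\<phi> = (\<lambda>i. if i = x then E1 else E2)"
  have "add4 (\<phi> x) (eval add4 mul4 \<phi> s) = eval add4 mul4 \<phi> s"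
    using S4.term_le[of \<phi> s "eval add4 mul4 \<phi> s"] x S4.aI by auto
  then have s1: "eval add4 mul4 \<phi> s = E1" using S4_top by (simp add: \<phi>_def)
  have "add4 (eval add4 mul4 \<phi> t) E2 = E2"
    using S4.term_le[of \<phi> t E2] nx unfolding \<phi>_def by (auto dest: TT_CC)
  moreover have "eval add4 mul4 \<phi> t = E1" using S s1 by (simp add: satisfies_def)
  ultimately show False by simp
qed

lemma distinguish:
  assumes S: "satisfies add4 mul4 (s, t)" and ab: "(a, b) \<in> TT s"
    and e1: "mul4 (\<phi> a) (\<phi> b) = E1" and J: "J \<noteq> E1"
    and lt: "\<forall>x\<in>CC t. add4 (\<phi> x) J = J"
    and pt: "\<forall>(p,q)\<in>TT t. add4 (mul4 (\<phi> p) (\<phi> q)) J = J"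
  shows False
proof -
  have "add4 (mul4 (\<phi> a) (\<phi> b)) (eval add4 mul4 \<phi> s) = eval add4 mul4 \<phi> s"
    using S4.term_le[of \<phi> s "eval add4 mul4 \<phi> s"] ab S4.aI by auto
  then have s1: "eval add4 mul4 \<phi> s = E1" using S4_top e1 by simp
  have "add4 (eval add4 mul4 \<phi> t) J = J"
    using S4.term_le[of \<phi> t J] lt pt by auto
  moreover have "eval add4 mul4 \<phi> t = E1" using S s1 by (simp add: satisfies_def)
  ultimately have "add4 E1 J = J" by simp
  then show False using J S4_top by blast
qed

lemma TT_S4:
  assumes S: "satisfies add4 mul4 (s, t)" and ab: "(a, b) \<in> TT s"
  shows "(a, b) \<in> Cl t"
proof (rule ccontr)
  assume nc: "(a, b) \<notin> Cl t"
  have aC: "a \<in> CC t" and bC: "b \<in> CC t" using TT_CC[OF ab] CC_S4[OF S] by auto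
  show False
  proof (cases "a = b")
    case True
    define \<phi> where "\<phi> = (\<lambda>i. if i = a then E4 else E2)"
    show False
    proof (rule distinguish[OF S ab, of \<phi> E4])
      show "mul4 (\<phi> a) (\<phi> b) = E1" using True by (simp add: \<phi>_def)
      show "\<forall>x\<in>CC t. add4 (\<phi> x) E4 = E4" by (simp add: \<phi>_def)
      show "\<forall>(p,q)\<in>TT t. add4 (mul4 (\<phi> p) (\<phi> q)) E4 = E4"
      proof (intro ballI, clarify)
        fix p q assume "(p, q) \<in> TT t"
        then have "\<not> (p = a \<and> q = a)" using nc True Cl.base by blast
        then show "add4 (mul4 (\<phi> p) (\<phi> q)) E4 = E4"
          by (cases "p = a"; cases "q = a") (simp_all add: \<phi>_def)
      qed
    qed simp
  next
    case False
    show False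
    proof (cases "\<exists>z. (a, z) \<in> Cl t")
      case True
      then obtain z where z: "(a, z) \<in> Cl t" by blast
      have n1: "(b, a) \<notin> Cl t" using nc Cl.r2[OF _ z] by blast
      have n2: "(a, a) \<notin> Cl t" using nc Cl.r1 bC by blast
      have n3: "(b, b) \<notin> Cl t" using n1 Cl.r1 aC by blast
      define \<phi> where "\<phi> = (\<lambda>i. if i = a \<or> i = b then E4 else E2)"
      show False
      proof (rule distinguish[OF S ab, of \<phi> E4])
        show "mul4 (\<phi> a) (\<phi> b) = E1" by (simp add: \<phi>_def)
        show "\<forall>x\<in>CC t. add4 (\<phi> x) E4 = E4" by (simp add: \<phi>_def)
        show "\<forall>(p,q)\<in>TT t. add4 (mul4 (\<phi> p) (\<phi> q)) E4 = E4"
        proof (intro ballI, clarify)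
          fix p q assume "(p, q) \<in> TT t"
          then have "\<not> ((p = a \<or> p = b) \<and> (q = a \<or> q = b))"
            using nc n1 n2 n3 Cl.base by blast
          then show "add4 (mul4 (\<phi> p) (\<phi> q)) E4 = E4"
            by (cases "p = a \<or> p = b"; cases "q = a \<or> q = b") (auto simp: \<phi>_def)
        qed
      qed simp
    next
      case nz: False
      define \<phi> where "\<phi> = (\<lambda>i. if i = a then E3 else E2)"
      show False
      proof (rule distinguish[OF S ab, of \<phi> E3])
        show "mul4 (\<phi> a) (\<phi> b) = E1" using False by (simp add: \<phi>_def)
        show "\<forall>x\<in>CC t. add4 (\<phi> x) E3 = E3" by (simp add: \<phi>_def)
        show "\<forall>(p,q)\<in>TT t. add4 (mul4 (\<phi> p) (\<phi> q)) E3 = E3"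
        proof (intro ballI, clarify)
          fix p q assume "(p, q) \<in> TT t"
          then have "p \<noteq> a" using nz Cl.base by blast
          then show "add4 (mul4 (\<phi> p) (\<phi> q)) E3 = E3"
            by (cases "q = a") (simp_all add: \<phi>_def)
        qed
      qed simp
    qed
  qed
qed

lemma le_of_S4:
  assumes M: "aisr A M" and S: "satisfies add4 mul4 (s, t)"
  shows "A (eval A M v s) (eval A M v t) = eval A M v t"
proof -
  interpret aisr A M by (rule M)
  have all: "(\<forall>x\<in>CC t. A (v x) (eval A M v t) = eval A M v t) \<and>
      (\<forall>(a,b)\<in>TT t. A (M (v a) (v b)) (eval A M v t) = eval A M v t)"
    using term_le[of v t "eval A M v t"] aI by simp
  show ?thesis
    unfolding term_le
  proof (intro conjI ballI)
    fix x assume "x \<in> CC s"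
    then show "A (v x) (eval A M v t) = eval A M v t" using all CC_S4[OF S] by blast
  next
    fix p assume p: "p \<in> TT s"
    obtain a b where [simp]: "p = (a, b)" by (cases p)
    have "(a, b) \<in> Cl t" using TT_S4[OF S] p by simp
    then show "case p of (a, b) \<Rightarrow> A (M (v a) (v b)) (eval A M v t) = eval A M v t"
      using Cl_le[of "(a,b)" t v] by simp
  qed
qed

lemma satD: "satisfies A M e \<Longrightarrow> eval A M v (fst e) = eval A M v (snd e)"
  by (simp add: satisfies_def)

theorem proposition3p8:
  fixes add mul :: "'a \<Rightarrow> 'a \<Rightarrow> 'a"
  shows "in_V_S4 add mul \<longleftrightarrow>
           (ai_semiring add mul \<and> (\<forall>e\<in>Sigma_401. satisfies add mul e))"
proof
  assume V: "in_V_S4 add mul"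
  have sat: "\<And>e. satisfies add4 mul4 e \<Longrightarrow> satisfies add mul e" using V in_V_S4_def by blast
  have sat3: "eval add mul (\<lambda>i. if i = 0 then x else if i = 1 then y else z) s =
     eval add mul (\<lambda>i. if i = 0 then x else if i = 1 then y else z) t"
    if "satisfies add4 mul4 (s, t)" for s t x y z
    using satD[OF sat[OF that]] by simp
  have "ai_semiring add mul"
    unfolding ai_semiring_def
  proof (intro conjI allI)
    fix x y z
    show "add (add x y) z = add x (add y z)"
      using sat3[of "Add (Add vx vy) vz" "Add vx (Add vy vz)" x y z] by (simp add: satisfies_def S4.aA)
    show "add x y = add y x"
      using sat3[of "Add vx vy" "Add vy vx" x y z] by (simp add: satisfies_def S4.aC)
    show "add x x = x"
      using sat3[of "Add vx vx" "vx" x y z] by (simp add: satisfies_def S4.aI)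
    show "mul (mul x y) z = mul x (mul y z)"
      using sat3[of "Mul (Mul vx vy) vz" "Mul vx (Mul vy vz)" x y z] by (simp add: satisfies_def S4.mA)
    show "mul x (add y z) = add (mul x y) (mul x z)"
      using sat3[of "Mul vx (Add vy vz)" "Add (Mul vx vy) (Mul vx vz)" x y z] by (simp add: satisfies_def S4.dL)
    show "mul (add y z) x = add (mul y x) (mul z x)"
      using sat3[of "Mul (Add vy vz) vx" "Add (Mul vy vx) (Mul vz vx)" x y z] by (simp add: satisfies_def S4.dR)
  qed
  moreover have "\<forall>e\<in>Sigma_401. satisfies add mul e"
  proof
    fix e assume "e \<in> Sigma_401"
    moreover
    have "satisfies add4 mul4 (Mul (Mul vx vy) vz, Mul (Mul vy vx) vz)"
      unfolding satisfies_def by (auto intro: S4_i1)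
    moreover have "satisfies add4 mul4 (Mul (Mul vx vy) vz, Add (Mul (Mul vx vy) vz) vy)"
      unfolding satisfies_def by (auto intro: S4_i2)
    moreover have "satisfies add4 mul4 (Mul vx vy, Add (Mul vx vy) vy)"
      unfolding satisfies_def by (auto intro: S4.i3)
    moreover have "satisfies add4 mul4 (Mul vy vz, Add (Mul vy vz) vy)"
      unfolding satisfies_def by (auto intro: S4.i4)
    moreover have "satisfies add4 mul4 (Mul (Mul vx vy) vz, Add (Add (Mul vx vy) (Mul vy vz)) (Mul vx vz))"
      unfolding satisfies_def by (auto intro: S4.i5)
    moreover have "satisfies add4 mul4 (Add (Mul vx vx) vy, Mul (Mul vx vx) vy)"
      unfolding satisfies_def by (auto intro: S4.i6)
    moreover have "satisfies add4 mul4 (Add (Mul (Mul v1 v2) v3) (Mul v3 v4),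
      Add (Add (Mul (Mul v1 v2) v3) (Mul v3 v4)) (Mul v3 v2))"
      unfolding satisfies_def by (auto intro: S4_i7)
    moreover have "satisfies add4 mul4 (Add (Mul v2 v3) (Mul v3 v4),
      Add (Add (Mul v2 v3) (Mul v3 v4)) (Mul v3 v2))"
      unfolding satisfies_def by (auto intro: S4.i8)
    ultimately have "satisfies add4 mul4 e" unfolding Sigma_401_def by blast
    then show "satisfies add mul e" by (rule sat)
  qed
  ultimately show "ai_semiring add mul \<and> (\<forall>e\<in>Sigma_401. satisfies add mul e)" by blast
next
  assume H: "ai_semiring add mul \<and> (\<forall>e\<in>Sigma_401. satisfies add mul e)"
  have Sg: "eval add mul v (fst e) = eval add mul v (snd e)" if "e \<in> Sigma_401" for e v
    using H that satD by blast
  have M: "aisr add mul"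
  proof unfold_locales
    fix x y z x2 x3 x4 :: 'a
    show "add (add x y) z = add x (add y z)" "add x y = add y x" "add x x = x"
      "mul (mul x y) z = mul x (mul y z)" "mul x (add y z) = add (mul x y) (mul x z)"
      "mul (add y z) x = add (mul y x) (mul z x)"
      using H unfolding ai_semiring_def by blast+
    show "mul x y = add (mul x y) y"
      using Sg[of "(Mul vx vy, Add (Mul vx vy) vy)" "\<lambda>i. if i = 0 then x else y"]
      by (simp add: Sigma_401_def)
    show "mul y z = add (mul y z) y"
      using Sg[of "(Mul vy vz, Add (Mul vy vz) vy)" "\<lambda>i. if i = 1 then y else z"]
      by (simp add: Sigma_401_def)
    show "mul (mul x y) z = add (add (mul x y) (mul y z)) (mul x z)"
      using Sg[of "(Mul (Mul vx vy) vz, Add (Add (Mul vx vy) (Mul vy vz)) (Mul vx vz))"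
          "\<lambda>i. if i = 0 then x else if i = 1 then y else z"]
      by (simp add: Sigma_401_def)
    show "add (mul x x) y = mul (mul x x) y"
      using Sg[of "(Add (Mul vx vx) vy, Mul (Mul vx vx) vy)" "\<lambda>i. if i = 0 then x else y"]
      by (simp add: Sigma_401_def)
    show "add (mul x2 x3) (mul x3 x4) = add (add (mul x2 x3) (mul x3 x4)) (mul x3 x2)"
      using Sg[of "(Add (Mul v2 v3) (Mul v3 v4), Add (Add (Mul v2 v3) (Mul v3 v4)) (Mul v3 v2))"
          "\<lambda>i. if i = 12 then x2 else if i = 13 then x3 else x4"]
      by (simp add: Sigma_401_def)
  qed
  interpret MM: aisr add mul by (rule M)
  show "in_V_S4 add mul"
    unfolding in_V_S4_def
  proof (intro allI impI)
    fix e assume S: "satisfies add4 mul4 e"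
    obtain s t where e: "e = (s, t)" by (cases e)
    have S': "satisfies add4 mul4 (t, s)" using S e by (simp add: satisfies_def)
    show "satisfies add mul e"
      unfolding e satisfies_def
    proof
      fix v
      have 1: "add (eval add mul v s) (eval add mul v t) = eval add mul v t"
        using le_of_S4[OF M] S e by blast
      have 2: "add (eval add mul v t) (eval add mul v s) = eval add mul v s"
        using le_of_S4[OF M S'] by blast
      show "eval add mul v (fst (s, t)) = eval add mul v (snd (s, t))"
        using 1 2 MM.aC by simp
    qed
  qed
qed

end
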